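(* There is an integer $N$ such that the following holds. Let $H$ be a connected graph with at least $N$ vertices that does not contain a subgraph isomorphic to $S_{4,4}$. Let $y_0$ be a vertex of $H$ with $\deg y_0\ge 4$, and let $y_0y_1y_2y_3y_4$ be a path in $H$ (distinct vertices with $y_i\sim y_{i+1}$). Then: 1. $\deg y_0=4$; 2. $y_0\sim y_2$, $y_0\nsim y_3$, and $y_0\nsim y_4$; 3. if $N(y_0)=\{y_1,y_2,y',y''\}$, then $y_1\nsim y'$ and $y_1\nsim y''$.
   Context: Graphs are finite simple graphs; $\sim$ denotes adjacency, $N(v)$ the set of neighbors of $v$, $\deg v=|N(v)|$. The sparkler graph $S_{4,4}$ is obtained from the star $K_{1,3}$ and the path $P_4$ on 4 vertices by adding an edge between an end vertex of $P_4$ and the central vertex of $K_{1,3}$. *)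

theory Defs
  imports Main
begin

definition sgraph :: "'a set \<Rightarrow> ('a \<Rightarrow> 'a \<Rightarrow> bool) \<Rightarrow> bool" where
  "sgraph V E \<longleftrightarrow> finite V \<and> (\<forall>x y. E x y \<longrightarrow> x \<in> V \<and> y \<in> V)
     \<and> (\<forall>x y. E x y \<longrightarrow> E y x) \<and> (\<forall>x. \<not> E x x)"

definition connected_graph :: "'a set \<Rightarrow> ('a \<Rightarrow> 'a \<Rightarrow> bool) \<Rightarrow> bool" where
  "connected_graph V E \<longleftrightarrow> (\<forall>u\<in>V. \<forall>v\<in>V. E\<^sup>*\<^sup>* u v)"

definition nbhd :: "('a \<Rightarrow> 'a \<Rightarrow> bool) \<Rightarrow> 'a \<Rightarrow> 'a set" where
  "nbhd E v = {u. E v u}"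

definition degree :: "('a \<Rightarrow> 'a \<Rightarrow> bool) \<Rightarrow> 'a \<Rightarrow> nat" where
  "degree E v = card (nbhd E v)"

text \<open>The graph contains a (not necessarily induced) subgraph isomorphic to the
  sparkler S_{4,4}: a centre c with three leaves a1 a2 a3, and a path p1 p2 p3 p4
  with p1 adjacent to c; all eight vertices distinct.\<close>
definition contains_S44 :: "'a set \<Rightarrow> ('a \<Rightarrow> 'a \<Rightarrow> bool) \<Rightarrow> bool" where
  "contains_S44 V E \<longleftrightarrow> (\<exists>c a1 a2 a3 p1 p2 p3 p4.
     set [c, a1, a2, a3, p1, p2, p3, p4] \<subseteq> V \<and> distinct [c, a1, a2, a3, p1, p2, p3, p4] \<and>
     E c a1 \<and> E c a2 \<and> E c a3 \<and> E c p1 \<and> E p1 p2 \<and> E p2 p3 \<and> E p3 p4)"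

end

theory Submission
  imports Defs
begin

lemma nbhd_fin: "sgraph V E \<Longrightarrow> finite (nbhd E v)"
proof -
  assume "sgraph V E"
  then have "nbhd E v \<subseteq> V" "finite V" unfolding sgraph_def nbhd_def by auto
  then show ?thesis using finite_subset by blast
qed

lemma three_elems:
  assumes "finite A" "card A \<ge> 3"
  shows "\<exists>a b c. a\<in>A \<and> b\<in>A \<and> c\<in>A \<and> distinct [a,b,c]"
proof -
  obtain T where "T \<subseteq> A" "card T = 3" using assms obtain_subset_with_card_n by metis
  then show ?thesis unfolding card_3_iff by auto
qed

lemma s44I:
  assumes "sgraph V E" "distinct [c,a1,a2,a3,p1,p2,p3,p4]"
    "E c a1" "E c a2" "E c a3" "E c p1" "E p1 p2" "E p2 p3" "E p3 p4"
  shows "contains_S44 V E"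
proof -
  have "c \<in> V \<and> a1 \<in> V \<and> a2 \<in> V \<and> a3 \<in> V \<and> p1 \<in> V \<and> p2 \<in> V \<and> p3 \<in> V \<and> p4 \<in> V"
    using assms(1,3-) unfolding sgraph_def by blast
  then have "set [c, a1, a2, a3, p1, p2, p3, p4] \<subseteq> V" by simp
  then show ?thesis unfolding contains_S44_def using assms(2-) by blast
qed

lemma star_path:
  assumes sg: "sgraph V E" and d: "distinct [c,p1,p2,p3,p4]"
    and e: "E c p1" "E p1 p2" "E p2 p3" "E p3 p4"
    and cd: "card (nbhd E c - {p1,p2,p3,p4}) \<ge> 3"
  shows "contains_S44 V E"
proof -
  define D where "D = nbhd E c - {p1,p2,p3,p4}"
  have "finite D" using nbhd_fin[OF sg] unfolding D_def by auto
  from three_elems[OF this cd[folded D_def]]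
  obtain a b x where abx: "a \<in> D" "b \<in> D" "x \<in> D" "distinct [a,b,x]" by blast
  have irr: "\<not> E c c" using sg unfolding sgraph_def by auto
  have ea: "E c a" "E c b" "E c x" using abx unfolding D_def nbhd_def by auto
  have "a \<noteq> c" "b \<noteq> c" "x \<noteq> c" using ea irr by auto
  moreover have "a \<notin> {p1,p2,p3,p4}" "b \<notin> {p1,p2,p3,p4}" "x \<notin> {p1,p2,p3,p4}"
    using abx unfolding D_def by auto
  ultimately have "distinct [c,a,b,x,p1,p2,p3,p4]" using abx(4) d by auto
  then show ?thesis using s44I[OF sg _ ea e] by blast
qed

lemma star_path2:
  assumes sg: "sgraph V E" and d: "distinct [c,p1,p2,p3,p4]"
    and e: "E c p1" "E p1 p2" "E p2 p3" "E p3 p4"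
    and n: "p2 \<notin> nbhd E c" "p3 \<notin> nbhd E c" "p4 \<notin> nbhd E c"
    and cd: "card (nbhd E c) \<ge> 4"
  shows "contains_S44 V E"
proof -
  have "nbhd E c - {p1,p2,p3,p4} = nbhd E c - {p1}" using n by auto
  moreover have "p1 \<in> nbhd E c" using e by (simp add: nbhd_def)
  ultimately have "card (nbhd E c - {p1,p2,p3,p4}) \<ge> 3" using cd nbhd_fin[OF sg]
    by (simp add: card_Diff_singleton)
  then show ?thesis using star_path[OF sg d e] by blast
qed


lemma key:
  assumes sg: "sgraph V E" and con: "connected_graph V E" and nS: "\<not> contains_S44 V E"
    and y0V: "y0 \<in> V" and deg: "degree E y0 \<ge> 4" and dist: "distinct [y0,y1,y2,y3,y4]"
    and e01: "E y0 y1" and e12: "E y1 y2" and e23: "E y2 y3" and e34: "E y3 y4"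
    and viol: "\<not> (degree E y0 = 4
       \<and> E y0 y2 \<and> \<not> E y0 y3 \<and> \<not> E y0 y4
       \<and> (\<forall>y' y''. nbhd E y0 = {y1, y2, y', y''} \<longrightarrow> \<not> E y1 y' \<and> \<not> E y1 y''))"
  shows "card V \<le> 165"
proof -
  have symE: "\<And>x y. E x y \<Longrightarrow> E y x" and irr: "\<And>x. \<not> E x x"
    and finV: "finite V" using sg unfolding sgraph_def by auto
  define S where "S = nbhd E y0"
  have finS: "finite S" using nbhd_fin[OF sg] S_def by simp
  have cS: "card S \<ge> 4" using deg unfolding S_def degree_def .
  have memS: "\<And>x. x \<in> S \<longleftrightarrow> E y0 x" unfolding S_def nbhd_def by simp
  have y1S: "y1 \<in> S" using memS e01 by simp
  have y0S: "y0 \<notin> S" using memS irr by simp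
  have s1: "card (S - {y1,y2,y3,y4}) \<le> 2"
  proof (rule ccontr)
    assume "\<not> ?thesis"
    then have "card (nbhd E y0 - {y1,y2,y3,y4}) \<ge> 3" unfolding S_def by simp
    then have "contains_S44 V E" using star_path[OF sg dist e01 e12 e23 e34] by blast
    then show False using nS by simp
  qed
  have cardsplit: "\<And>B. finite B \<Longrightarrow> card S \<le> card (S - B) + card B"
  proof -
    fix B :: "'a set" assume fB: "finite B"
    have "S \<subseteq> (S - B) \<union> B" by auto
    then have "card S \<le> card ((S - B) \<union> B)" using finS fB by (intro card_mono) auto
    also have "\<dots> \<le> card (S - B) + card B" by (rule card_Un_le)
    finally show "card S \<le> card (S - B) + card B" .
  qed
  have notall: "y2 \<in> S \<or> y3 \<in> S \<or> y4 \<in> S"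
  proof (rule ccontr)
    assume "\<not> ?thesis"
    then have "S - {y1,y2,y3,y4} = S - {y1}" by auto
    then have "card (S - {y1,y2,y3,y4}) = card S - 1" using y1S finS by (simp add: card_Diff_singleton)
    then show False using s1 cS by simp
  qed
  have vcase: "y3 \<in> S \<or> y4 \<in> S \<or> (y2 \<in> S \<and> (\<exists>a b. a \<in> S \<and> b \<in> S \<and> distinct [y0,y1,y2,a,b] \<and> E y1 a))"
  proof (rule ccontr)
    assume nc: "\<not> ?thesis"
    then have n3: "y3 \<notin> S" and n4: "y4 \<notin> S" by auto
    then have y2S: "y2 \<in> S" using notall by auto
    have "S - {y1,y2,y3,y4} = S - {y1,y2}" using n3 n4 by auto
    moreover have "card (S - {y1,y2}) = card S - 2" using y1S y2S finS dist
      by (subst card_Diff_subset) auto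
    ultimately have c4: "card S = 4" using cS s1 by simp
    have "\<exists>y' y''. nbhd E y0 = {y1,y2,y',y''} \<and> (E y1 y' \<or> E y1 y'')"
      using viol c4 y2S n3 n4 memS unfolding S_def degree_def by auto
    then obtain a b where ab: "S = {y1,y2,a,b}" "E y1 a \<or> E y1 b" unfolding S_def by blast
    have "distinct [y1,y2,a,b]"
    proof (rule ccontr)
      assume "\<not> distinct [y1,y2,a,b]"
      then have "card {y1,y2,a,b} \<le> 3"
        by (auto simp: card_insert_if card_insert_le insert_commute)
      then show False using ab(1) c4 by simp
    qed
    moreover have "a \<noteq> y0" "b \<noteq> y0" using ab(1) y0S by auto
    ultimately have "distinct [y0,y1,y2,a,b]" "distinct [y0,y1,y2,b,a]" using dist by auto
    moreover have "a \<in> S" "b \<in> S" using ab(1) by auto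
    ultimately show False using nc ab(2) y2S by blast
  qed
  define W where "W = {y0,y1,y2,y3,y4} \<union> S"
  have finW: "finite W" using finS W_def by simp
  have SW: "S \<subseteq> W" and yW: "y0 \<in> W" "y1 \<in> W" "y2 \<in> W" "y3 \<in> W" "y4 \<in> W"
    unfolding W_def by auto
  have "card {y1,y2,y3,y4} = 4" using dist by simp
  then have cS6: "card S \<le> 6" using cardsplit[of "{y1,y2,y3,y4}"] s1 by simp
  have cW: "card W \<le> 11"
  proof -
    have "card W \<le> card {y0,y1,y2,y3,y4} + card S" unfolding W_def by (rule card_Un_le)
    moreover have "card {y0,y1,y2,y3,y4} = 5" using dist by simp
    ultimately show ?thesis using cS6 by simp
  qed
  define good where "good x \<longleftrightarrow> (\<exists>p1 p2 p3 p4. distinct [x,p1,p2,p3,p4] \<and> p1 \<in> W \<and> p2 \<in> W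
     \<and> p3 \<in> W \<and> p4 \<in> W \<and> E x p1 \<and> E p1 p2 \<and> E p2 p3 \<and> E p3 p4)" for x
  have t3: "\<exists>t. t \<in> S \<and> t \<notin> {y1,y2,y3}"
  proof (rule ccontr)
    assume "\<not> ?thesis"
    then have "S \<subseteq> {y1,y2,y3}" by auto
    then have "card S \<le> card {y1,y2,y3}" by (intro card_mono) auto
    also have "\<dots> \<le> 3" by (simp add: card_insert_if)
    finally show False using cS by simp
  qed
  then obtain t where t: "t \<in> S" "t \<notin> {y1,y2,y3}" by blast
  have ty0: "t \<noteq> y0" using t y0S by auto
  have et: "E y0 t" "E t y0" using t memS symE by auto
  have e10: "E y1 y0" and e21: "E y2 y1" and e32: "E y3 y2" and e43: "E y4 y3"
    using symE e01 e12 e23 e34 by auto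
  have goodW: "good x" if xW: "x \<in> W" for x
  proof -
    from xW consider "x = y0" | "x = y1" | "x = y2" | "x = y3" | "x = y4"
      | "x \<in> S" "x \<notin> {y0,y1,y2,y3,y4}" unfolding W_def by blast
    then show "good x"
    proof cases
      case 1 then show ?thesis unfolding good_def
        using dist e01 e12 e23 e34 yW by (intro exI[of _ y1] exI[of _ y2] exI[of _ y3] exI[of _ y4]) auto
    next
      case 2
      have "y2 \<in> S \<or> (y2 \<notin> S \<and> y3 \<in> S) \<or> (y2 \<notin> S \<and> y3 \<notin> S \<and> y4 \<in> S)" using notall by blast
      then show ?thesis
      proof (elim disjE conjE)
        assume "y2 \<in> S" then have "E y0 y2" using memS by auto
        then show ?thesis unfolding good_def using 2
          dist e10 e23 e34 yW by (intro exI[of _ y0] exI[of _ y2] exI[of _ y3] exI[of _ y4]) auto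
      next
        assume "y3 \<in> S" then have "E y3 y0" using memS symE by auto
        then show ?thesis unfolding good_def using 2 t ty0 et SW
          dist e12 e23 yW by (intro exI[of _ y2] exI[of _ y3] exI[of _ y0] exI[of _ t]) auto
      next
        assume "y4 \<in> S" then have "E y4 y0" using memS symE by auto
        then show ?thesis unfolding good_def using 2
          dist e12 e23 e34 yW by (intro exI[of _ y2] exI[of _ y3] exI[of _ y4] exI[of _ y0]) auto
      qed
    next
      case 3
      from vcase show ?thesis
      proof (elim disjE conjE exE)
        assume "y3 \<in> S" then have "E y0 y3" using memS by auto
        then show ?thesis unfolding good_def using 3
          dist e21 e10 e34 yW by (intro exI[of _ y1] exI[of _ y0] exI[of _ y3] exI[of _ y4]) auto
      next
        assume "y4 \<in> S" then have "E y0 y4" using memS by auto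
        then show ?thesis unfolding good_def using 3
          dist e21 e10 e43 yW by (intro exI[of _ y1] exI[of _ y0] exI[of _ y4] exI[of _ y3]) auto
      next
        fix a b assume ab: "a \<in> S" "b \<in> S" "distinct [y0,y1,y2,a,b]" "E y1 a"
        then have "E a y0" "E y0 b" using memS symE by auto
        then show ?thesis unfolding good_def using 3 ab SW
          dist e21 yW by (intro exI[of _ y1] exI[of _ a] exI[of _ y0] exI[of _ b]) auto
      qed
    next
      case 4 then show ?thesis unfolding good_def using t ty0 et SW
          dist e32 e21 e10 yW by (intro exI[of _ y2] exI[of _ y1] exI[of _ y0] exI[of _ t]) auto
    next
      case 5 then show ?thesis unfolding good_def
          using dist e43 e32 e21 e10 yW by (intro exI[of _ y3] exI[of _ y2] exI[of _ y1] exI[of _ y0]) auto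
    next
      case 6 then have "E x y0" using memS symE by auto
      then show ?thesis unfolding good_def using 6
          dist e01 e12 e23 yW by (intro exI[of _ y0] exI[of _ y1] exI[of _ y2] exI[of _ y3]) auto
    qed
  qed
  have A: "card (nbhd E x - W) \<le> 2" if xW: "x \<in> W" for x
  proof (rule ccontr)
    assume c: "\<not> ?thesis"
    from goodW[OF xW] obtain p1 p2 p3 p4 where p: "distinct [x,p1,p2,p3,p4]" "p1 \<in> W" "p2 \<in> W"
      "p3 \<in> W" "p4 \<in> W" "E x p1" "E p1 p2" "E p2 p3" "E p3 p4" unfolding good_def by blast
    have "nbhd E x - W \<subseteq> nbhd E x - {p1,p2,p3,p4}" using p by auto
    then have "card (nbhd E x - W) \<le> card (nbhd E x - {p1,p2,p3,p4})"
      using nbhd_fin[OF sg] by (intro card_mono) auto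
    then have "card (nbhd E x - {p1,p2,p3,p4}) \<ge> 3" using c by simp
    then have "contains_S44 V E" using star_path[OF sg p(1) p(6-9)] by blast
    then show False using nS by simp
  qed
  have B: False if xW: "x \<in> W" and u: "u1 \<notin> W" "u2 \<notin> W" "u3 \<notin> W" "distinct [u1,u2,u3]"
    and eu: "E x u1" "E u1 u2" "E u2 u3" for x u1 u2 u3
  proof -
    have uS: "u1 \<notin> S" "u2 \<notin> S" "u3 \<notin> S" using u SW by auto
    have cSS: "card (nbhd E y0) \<ge> 4" using cS S_def by simp
    have "contains_S44 V E"
    proof (cases "x \<in> S")
      case True
      then have "E y0 x" using memS by simp
      moreover have "distinct [y0,x,u1,u2,u3]" using u xW yW True y0S by auto
      ultimately show ?thesis using star_path2[OF sg _ _ eu, of y0] uS S_def cSS by auto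
    next
      case False
      with xW have "x = y0 \<or> x = y2 \<or> x = y3 \<or> x = y4" using y1S unfolding W_def by auto
      then show ?thesis
      proof (elim disjE)
        assume "x = y0" then have "u1 \<in> S" using eu memS by simp
        then show ?thesis using uS by simp
      next
        assume x2: "x = y2"
        have "distinct [y0,y1,y2,u1,u2]" using u yW dist by auto
        then show ?thesis using star_path2[OF sg _ e01 e12] eu x2 uS False S_def cSS by auto
      next
        assume x3: "x = y3"
        show ?thesis
        proof (cases "y2 \<in> S")
          case True
          have "distinct [y0,y2,y3,u1,u2]" using u yW dist by auto
          then show ?thesis using star_path2[OF sg _ _ e23] True memS eu x3 uS False S_def cSS by auto
        next
          case F2: False
          then have "y4 \<in> S" using notall x3 False by auto
          moreover have "distinct [y0,y4,y3,u1,u2]" using u yW dist by auto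
          ultimately show ?thesis using star_path2[OF sg _ _ e43] memS eu x3 uS False S_def cSS by auto
        qed
      next
        assume x4: "x = y4"
        show ?thesis
        proof (cases "y3 \<in> S")
          case True
          have "distinct [y0,y3,y4,u1,u2]" using u yW dist by auto
          then show ?thesis using star_path2[OF sg _ _ e34] True memS eu x4 uS False S_def cSS by auto
        next
          case F3: False
          then have "y2 \<in> S" using notall x4 False by auto
          moreover have "distinct [y0,y2,y3,y4,u1]" using u yW dist by auto
          ultimately show ?thesis using star_path2[OF sg _ _ e23 e34] memS eu x4 uS False F3 S_def cSS by auto
        qed
      qed
    qed
    then show False using nS by simp
  qed
  have C: "card (nbhd E z) \<le> 6" if wW: "w \<in> W" and zW: "z \<notin> W" and ezw: "E z w" for z w
  proof (rule ccontr)
    assume c: "\<not> ?thesis"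
    from goodW[OF wW] obtain p1 p2 p3 p4 where p: "distinct [w,p1,p2,p3,p4]" "p1 \<in> W" "p2 \<in> W"
      "p3 \<in> W" "p4 \<in> W" "E w p1" "E p1 p2" "E p2 p3" "E p3 p4" unfolding good_def by blast
    have d: "distinct [z,w,p1,p2,p3]" using p zW wW by auto
    have "card {w,p1,p2,p3} = 4" using p(1) by simp
    then have "card (nbhd E z) - 4 \<le> card (nbhd E z - {w,p1,p2,p3})"
      by (metis diff_card_le_card_Diff finite.emptyI finite_insert)
    then have "card (nbhd E z - {w,p1,p2,p3}) \<ge> 3" using c by simp
    then have "contains_S44 V E" using star_path[OF sg d ezw p(6-8)] by blast
    then show False using nS by simp
  qed
  define N1 where "N1 = (\<Union>x\<in>W. nbhd E x - W)"
  define N2 where "N2 = (\<Union>u\<in>N1. nbhd E u)"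
  have finN1: "finite N1" unfolding N1_def using finW nbhd_fin[OF sg] by auto
  have N1p: "u \<notin> W \<and> (\<exists>x\<in>W. E u x)" if "u \<in> N1" for u
    using that symE unfolding N1_def nbhd_def by auto
  have cN1: "card N1 \<le> 22"
  proof -
    have "card N1 \<le> (\<Sum>x\<in>W. card (nbhd E x - W))" unfolding N1_def using finW by (rule card_UN_le)
    also have "\<dots> \<le> card W * 2" using sum_bounded_above[of W "\<lambda>x. card (nbhd E x - W)" 2] A by simp
    finally show ?thesis using cW by simp
  qed
  have cN2: "card N2 \<le> 132"
  proof -
    have "card N2 \<le> (\<Sum>u\<in>N1. card (nbhd E u))" unfolding N2_def using finN1 by (rule card_UN_le)
    also have "\<dots> \<le> card N1 * 6" using sum_bounded_above[of N1 "\<lambda>u. card (nbhd E u)" 6] C N1p by (simp add: Ball_def) blast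
    finally show ?thesis using cN1 by simp
  qed
  have cover: "v \<in> W \<union> N1 \<union> N2" if "E\<^sup>*\<^sup>* y0 v" for v
    using that
  proof (induction rule: rtranclp_induct)
    case base then show ?case using yW by simp
  next
    case (step v v')
    show ?case
    proof (cases "v \<in> W")
      case True
      then show ?thesis using step(2) unfolding N1_def nbhd_def by auto
    next
      case vW: False
      show ?thesis
      proof (cases "v \<in> N1")
        case True
        then show ?thesis using step(2) unfolding N2_def nbhd_def by auto
      next
        case vN1: False
        with vW step(3) have "v \<in> N2" by auto
        then obtain u where uN1: "u \<in> N1" and euv: "E u v" unfolding N2_def nbhd_def by auto
        from uN1 obtain x where x: "x \<in> W" "E x u" unfolding N1_def nbhd_def by auto
        have uW: "u \<notin> W" using N1p uN1 by blast
        show ?thesis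
        proof (cases "v' \<in> W \<or> v' \<in> N1")
          case True
          have "v' \<notin> W"
          proof
            assume "v' \<in> W"
            then have "v \<in> N1" using step(2) symE vW unfolding N1_def nbhd_def by auto
            then show False using vN1 by simp
          qed
          with True show ?thesis by simp
        next
          case False
          have "distinct [u,v,v']" using uN1 vN1 False irr step(2) by auto
          then have False using B[OF x(1) uW vW _ _ x(2) euv step(2)] False by blast
          then show ?thesis ..
        qed
      qed
    qed
  qed
  have "V \<subseteq> W \<union> N1 \<union> N2"
    using cover con y0V unfolding connected_graph_def by blast
  then have "card V \<le> card (W \<union> N1 \<union> N2)"
    using finW finN1 nbhd_fin[OF sg] unfolding N2_def by (intro card_mono) auto
  also have "\<dots> \<le> card W + card N1 + card N2"
    by (meson add_le_mono card_Un_le le_refl order_trans)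
  finally show ?thesis using cW cN1 cN2 by simp
qed

theorem lemma4:
  shows "\<exists>N::nat. \<forall>(V::nat set) E. sgraph V E \<and> connected_graph V E \<and> card V \<ge> N
    \<and> \<not> contains_S44 V E \<longrightarrow>
    (\<forall>y0 y1 y2 y3 y4. y0 \<in> V \<and> degree E y0 \<ge> 4
       \<and> distinct [y0, y1, y2, y3, y4] \<and> E y0 y1 \<and> E y1 y2 \<and> E y2 y3 \<and> E y3 y4 \<longrightarrow>
       degree E y0 = 4
       \<and> E y0 y2 \<and> \<not> E y0 y3 \<and> \<not> E y0 y4
       \<and> (\<forall>y' y''. nbhd E y0 = {y1, y2, y', y''} \<longrightarrow> \<not> E y1 y' \<and> \<not> E y1 y''))"
proof (intro exI[of _ 166] allI impI)
  fix V :: "nat set" and E y0 y1 y2 y3 y4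
  assume H: "sgraph V E \<and> connected_graph V E \<and> 166 \<le> card V \<and> \<not> contains_S44 V E"
    and Y: "y0 \<in> V \<and> 4 \<le> degree E y0 \<and> distinct [y0, y1, y2, y3, y4] \<and> E y0 y1 \<and> E y1 y2 \<and> E y2 y3 \<and> E y3 y4"
  show "degree E y0 = 4
       \<and> E y0 y2 \<and> \<not> E y0 y3 \<and> \<not> E y0 y4
       \<and> (\<forall>y' y''. nbhd E y0 = {y1, y2, y', y''} \<longrightarrow> \<not> E y1 y' \<and> \<not> E y1 y'')"
  proof (rule ccontr)
    assume n: "\<not> ?thesis"
    have "card V \<le> 165" using H Y by (intro key[of V E y0 y1 y2 y3 y4, OF _ _ _ _ _ _ _ _ _ _ n]) auto
    then show False using H by simp
  qed
qed

end
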